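(* Consider the following process on a finite vertex set $V=\{1,\dots,p\}$. One maintains a list of cliques $[C_1,\dots,C_m]$ and a set of outstanding vertices $O=V\setminus\bigcup_i C_i$; the associated graph $G$ on $V$ has an edge between two distinct vertices iff they lie in a common $C_i$. Initially the list is a given list of nonempty subsets (for instance a single nonempty subset), and the vertices of $\bigcup_i C_i$ are listed in an order $u_1,\dots,u_r$ whose reverse $[u_r,\dots,u_1]$ is a perfect elimination order of the graph induced by the initial cliques. While $O\ne\emptyset$, a step chooses a clique $C_a$ in the list, a vertex $v\in O$ and a subset $S\subseteq C_a$, and then: if $S$ is a nonempty proper subset of $C_a$, the clique $S\cup\{v\}$ is added to the list; if $S=C_a$, $C_a$ is replaced by $C_a\cup\{v\}$; if $S=\emptyset$, the clique $\{v\}$ is added; finally $v$ is removed from $O$. Let $u_{r+1},\dots,u_p$ be the vertices in the order in which they are added. Then, for any such sequence of choices, $[u_p,u_{p-1},\dots,u_1]$ is a perfect elimination order of the final graph $G$; i.e. the process adds vertices in reverse perfect elimination order.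
   Context: For a graph $G$ on $n$ vertices and an ordering $[v_1,\dots,v_n]$ of its vertices, let $G_i$ be the subgraph induced by $\{v_i,\dots,v_n\}$. The ordering is a perfect elimination order if for every $i$ the set of neighbours of $v_i$ lying in $G_{i+1}$ is complete (pairwise adjacent) in $G_{i+1}$, i.e. $v_i$ is simplicial in $G_i$. *)

theory Defs
  imports Main
begin

definition clique_adj :: "'a set list \<Rightarrow> 'a \<Rightarrow> 'a \<Rightarrow> bool" where
  "clique_adj Cs x y \<longleftrightarrow> x \<noteq> y \<and> (\<exists>C\<in>set Cs. x \<in> C \<and> y \<in> C)"

definition perfect_elim_order :: "('a \<Rightarrow> 'a \<Rightarrow> bool) \<Rightarrow> 'a set \<Rightarrow> 'a list \<Rightarrow> bool" where
  "perfect_elim_order E V vs \<longleftrightarrow> distinct vs \<and> set vs = V \<and>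
     (\<forall>i < length vs. \<forall>x \<in> set (drop (Suc i) vs). \<forall>y \<in> set (drop (Suc i) vs).
        E (vs ! i) x \<and> E (vs ! i) y \<and> x \<noteq> y \<longrightarrow> E x y)"

text \<open>V is the ground vertex set;
the outstanding vertices are V minus the union of the cliques.\<close>
inductive clique_step :: "'a set \<Rightarrow> 'a set list \<times> 'a list \<Rightarrow> 'a set list \<times> 'a list \<Rightarrow> bool"
  for V where
  proper: "\<lbrakk> v \<in> V - \<Union>(set Cs); a < length Cs; S \<subseteq> Cs ! a; S \<noteq> {}; S \<noteq> Cs ! a \<rbrakk>
     \<Longrightarrow> clique_step V (Cs, us) (Cs @ [S \<union> {v}], us @ [v])"
| whole: "\<lbrakk> v \<in> V - \<Union>(set Cs); a < length Cs \<rbrakk>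
     \<Longrightarrow> clique_step V (Cs, us) (Cs[a := Cs ! a \<union> {v}], us @ [v])"
| empty: "\<lbrakk> v \<in> V - \<Union>(set Cs); a < length Cs \<rbrakk>
     \<Longrightarrow> clique_step V (Cs, us) (Cs @ [{v}], us @ [v])"

end

theory Submission
  imports Defs
begin

lemma adj_proper:
  assumes "x \<noteq> v" "y \<noteq> v" "S \<subseteq> C" "C \<in> set Cs"
  shows "clique_adj (Cs @ [S \<union> {v}]) x y = clique_adj Cs x y"
  using assms unfolding clique_adj_def by auto
lemma adj_whole:
  assumes "x \<noteq> v" "y \<noteq> v" "a < length Cs"
  shows "clique_adj (Cs[a := Cs ! a \<union> {v}]) x y = clique_adj Cs x y"
proof
  assume "clique_adj (Cs[a := Cs ! a \<union> {v}]) x y"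
  then obtain C where C: "C \<in> set (Cs[a := Cs ! a \<union> {v}])" "x \<in> C" "y \<in> C" "x \<noteq> y"
    unfolding clique_adj_def by blast
  have "C \<in> insert (Cs ! a \<union> {v}) (set Cs)" using C(1) set_update_subset_insert by fast
  then show "clique_adj Cs x y"
  proof
    assume "C = Cs ! a \<union> {v}"
    then show ?thesis using C assms nth_mem unfolding clique_adj_def by fastforce
  qed (use C in \<open>auto simp: clique_adj_def\<close>)
next
  assume "clique_adj Cs x y"
  then obtain C where C: "C \<in> set Cs" "x \<in> C" "y \<in> C" "x \<noteq> y"
    unfolding clique_adj_def by blast
  then obtain j where j: "j < length Cs" "C = Cs ! j" by (auto simp: in_set_conv_nth)
  define C' where "C' = Cs[a := Cs ! a \<union> {v}] ! j"
  have "C' \<in> set (Cs[a := Cs ! a \<union> {v}])" using j unfolding C'_def by simp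
  moreover have "C \<subseteq> C'" using j assms unfolding C'_def by (cases "j = a") auto
  ultimately show "clique_adj (Cs[a := Cs ! a \<union> {v}]) x y"
    using C unfolding clique_adj_def by blast
qed
lemma union_whole:
  assumes "a < length Cs"
  shows "\<Union>(set (Cs[a := Cs ! a \<union> {v}])) = insert v (\<Union>(set Cs))"
proof
  show "\<Union>(set (Cs[a := Cs ! a \<union> {v}])) \<subseteq> insert v (\<Union>(set Cs))"
  proof -
    have "Cs ! a \<in> set Cs" using assms by (rule nth_mem)
    have "\<Union>(set (Cs[a := Cs ! a \<union> {v}])) \<subseteq> \<Union>(insert (Cs ! a \<union> {v}) (set Cs))"
      by (rule Union_mono[OF set_update_subset_insert])
    also have "\<dots> = insert v (\<Union>(set Cs))" using Union_upper[OF \<open>Cs ! a \<in> set Cs\<close>] by (simp only: Union_insert) blast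
    finally show ?thesis .
  qed
next
  have i: "Cs ! a \<union> {v} \<in> set (Cs[a := Cs ! a \<union> {v}])" using assms by (rule set_update_memI)
  have "C \<subseteq> \<Union>(set (Cs[a := Cs ! a \<union> {v}]))" if CC: "C \<in> set Cs" for C
  proof -
    obtain j where j: "j < length Cs" "C = Cs ! j" using CC unfolding in_set_conv_nth by blast
    have "Cs[a := Cs ! a \<union> {v}] ! j \<in> set (Cs[a := Cs ! a \<union> {v}])" using j by (intro nth_mem) simp
    moreover have "C \<subseteq> Cs[a := Cs ! a \<union> {v}] ! j" using j assms by (cases "j = a") auto
    ultimately show ?thesis by blast
  qed
  note hC = this
  show "insert v (\<Union>(set Cs)) \<subseteq> \<Union>(set (Cs[a := Cs ! a \<union> {v}]))"
  proof (rule subsetI)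
    fix x assume x: "x \<in> insert v (\<Union>(set Cs))"
    show "x \<in> \<Union>(set (Cs[a := Cs ! a \<union> {v}]))"
    proof (cases "x = v")
      case True
      then have "x \<in> Cs ! a \<union> {v}" by simp
      then show ?thesis using i by (rule UnionI[rotated])
    next
      case False
      then obtain C where C: "C \<in> set Cs" "x \<in> C" using x by auto
      then show ?thesis using hC[OF C(1)] by blast
    qed
  qed
qed
lemma nb_whole:
  assumes "clique_adj (Cs[a := Cs ! a \<union> {v}]) v x" "v \<notin> \<Union>(set Cs)" "a < length Cs"
  shows "x \<in> Cs ! a"
proof -
  obtain C where C: "C \<in> set (Cs[a := Cs ! a \<union> {v}])" "v \<in> C" "x \<in> C" "x \<noteq> v"
    using assms(1) unfolding clique_adj_def by blast
  have "C \<in> insert (Cs ! a \<union> {v}) (set Cs)" using C(1) set_update_subset_insert by fast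
  then show ?thesis using C assms(2) by auto
qed
lemma peo_cons:
  assumes peo: "perfect_elim_order E V vs"
    and vV: "v \<notin> V"
    and agree: "\<And>x y. x \<noteq> v \<Longrightarrow> y \<noteq> v \<Longrightarrow> E' x y = E x y"
    and nb: "\<And>x. E' v x \<Longrightarrow> x \<in> T"
    and cl: "\<And>x y. x \<in> T \<Longrightarrow> y \<in> T \<Longrightarrow> x \<noteq> y \<Longrightarrow> E x y"
  shows "perfect_elim_order E' (insert v V) (v # vs)"
  unfolding perfect_elim_order_def
proof (intro conjI allI impI ballI)
  show "distinct (v # vs)" using peo vV by (auto simp: perfect_elim_order_def)
  show "set (v # vs) = insert v V" using peo by (auto simp: perfect_elim_order_def)
next
  fix i x y
  assume i: "i < length (v # vs)" and x: "x \<in> set (drop (Suc i) (v # vs))"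
    and y: "y \<in> set (drop (Suc i) (v # vs))"
    and h: "E' ((v # vs) ! i) x \<and> E' ((v # vs) ! i) y \<and> x \<noteq> y"
  have sv: "set vs = V" and dv: "distinct vs" using peo by (auto simp: perfect_elim_order_def)
  have xv: "x \<in> V" "y \<in> V" using x y sv by (auto dest: in_set_dropD)
  hence xnv: "x \<noteq> v" "y \<noteq> v" using vV by auto
  show "E' x y"
  proof (cases i)
    case 0
    then have "x \<in> T" "y \<in> T" using h nb by auto
    then show ?thesis using cl h agree xnv by auto
  next
    case (Suc j)
    have j: "j < length vs" using i Suc by simp
    have vj: "vs ! j \<noteq> v" using j sv vV nth_mem by blast
    have x': "x \<in> set (drop (Suc j) vs)" "y \<in> set (drop (Suc j) vs)" using x y Suc by auto
    have "E (vs ! j) x \<and> E (vs ! j) y \<and> x \<noteq> y" using h Suc agree vj xnv by auto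
    then have "E x y" using peo j x' unfolding perfect_elim_order_def by blast
    then show ?thesis using agree xnv by auto
  qed
qed

lemma step_props:
  assumes "clique_step V (Cs, us) (Cs', us')"
  shows "\<exists>v T. v \<notin> \<Union>(set Cs) \<and> us' = us @ [v] \<and> \<Union>(set Cs') = insert v (\<Union>(set Cs))
    \<and> (\<forall>x y. x \<noteq> v \<longrightarrow> y \<noteq> v \<longrightarrow> clique_adj Cs' x y = clique_adj Cs x y)
    \<and> (\<forall>x. clique_adj Cs' v x \<longrightarrow> x \<in> T)
    \<and> (\<forall>x y. x \<in> T \<longrightarrow> y \<in> T \<longrightarrow> x \<noteq> y \<longrightarrow> clique_adj Cs x y)"
  using assms
proof cases
  case (proper v a S)
  have ca: "Cs ! a \<in> set Cs" using proper(4) by (rule nth_mem)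
  have u: "\<Union>(set Cs') = insert v (\<Union>(set Cs))" using proper(1,5) ca by auto
  have adj: "\<forall>x y. x \<noteq> v \<longrightarrow> y \<noteq> v \<longrightarrow> clique_adj Cs' x y = clique_adj Cs x y"
    using adj_proper[OF _ _ proper(5) ca] proper(1) by blast
  have nb: "\<forall>x. clique_adj Cs' v x \<longrightarrow> x \<in> S"
    using proper(1,3) unfolding clique_adj_def by auto
  have cl: "\<forall>x y. x \<in> S \<longrightarrow> y \<in> S \<longrightarrow> x \<noteq> y \<longrightarrow> clique_adj Cs x y"
    using proper(5) ca unfolding clique_adj_def by blast
  show ?thesis using proper(2,3) u adj nb cl by blast
next
  case (whole v a)
  have ca: "Cs ! a \<in> set Cs" using whole(4) by (rule nth_mem)
  have u: "\<Union>(set Cs') = insert v (\<Union>(set Cs))" using union_whole[OF whole(4)] whole(1) by simp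
  have adj: "\<forall>x y. x \<noteq> v \<longrightarrow> y \<noteq> v \<longrightarrow> clique_adj Cs' x y = clique_adj Cs x y"
    using adj_whole[OF _ _ whole(4)] whole(1) by blast
  have nb: "\<forall>x. clique_adj Cs' v x \<longrightarrow> x \<in> Cs ! a"
    using nb_whole[OF _ _ whole(4)] whole(1,3) by blast
  have cl: "\<forall>x y. x \<in> Cs ! a \<longrightarrow> y \<in> Cs ! a \<longrightarrow> x \<noteq> y \<longrightarrow> clique_adj Cs x y"
    using ca unfolding clique_adj_def by blast
  show ?thesis using whole(2,3) u adj nb cl by blast
next
  case (empty v a)
  have u: "\<Union>(set Cs') = insert v (\<Union>(set Cs))" using empty(1) by auto
  have adj: "\<forall>x y. x \<noteq> v \<longrightarrow> y \<noteq> v \<longrightarrow> clique_adj Cs' x y = clique_adj Cs x y"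
    using empty(1) unfolding clique_adj_def by auto
  have nb: "\<forall>x. clique_adj Cs' v x \<longrightarrow> x \<in> {}"
    using empty(1,3) unfolding clique_adj_def by auto
  show ?thesis using empty(2,3) u adj nb by blast
qed

lemma run_inv:
  assumes "(clique_step V)\<^sup>*\<^sup>* s t"
    and "perfect_elim_order (clique_adj (fst s)) (\<Union>(set (fst s))) (rev (snd s))"
  shows "perfect_elim_order (clique_adj (fst t)) (\<Union>(set (fst t))) (rev (snd t))"
  using assms
proof (induction rule: rtranclp_induct)
  case base then show ?case by simp
next
  case (step t u)
  obtain Cs us where t: "t = (Cs, us)" by fastforce
  obtain Cs' us' where u: "u = (Cs', us')" by fastforce
  from step_props[of V Cs us Cs' us'] step(2) t u obtain v T where
    P: "v \<notin> \<Union>(set Cs)" "us' = us @ [v]" "\<Union>(set Cs') = insert v (\<Union>(set Cs))"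
    "\<forall>x y. x \<noteq> v \<longrightarrow> y \<noteq> v \<longrightarrow> clique_adj Cs' x y = clique_adj Cs x y"
    "\<forall>x. clique_adj Cs' v x \<longrightarrow> x \<in> T"
    "\<forall>x y. x \<in> T \<longrightarrow> y \<in> T \<longrightarrow> x \<noteq> y \<longrightarrow> clique_adj Cs x y" by blast
  have "perfect_elim_order (clique_adj Cs') (insert v (\<Union>(set Cs))) (v # rev us)"
  proof (rule peo_cons[where T = T and E = "clique_adj Cs"])
    show "perfect_elim_order (clique_adj Cs) (\<Union>(set Cs)) (rev us)"
      using step.IH step.prems t by simp
  qed (use P in auto)
  then show ?case using u P by simp
qed

theorem theorem15:
  fixes p :: nat and Cs0 Cs :: "nat set list" and us0 us :: "nat list"
  assumes init_sub: "\<forall>C \<in> set Cs0. C \<noteq> {} \<and> C \<subseteq> {1..p}"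
    and init_order: "distinct us0" "set us0 = \<Union>(set Cs0)"
    and init_peo: "perfect_elim_order (clique_adj Cs0) (\<Union>(set Cs0)) (rev us0)"
    and run: "(clique_step {1..p})\<^sup>*\<^sup>* (Cs0, us0) (Cs, us)"
    and finished: "\<Union>(set Cs) = {1..p}"
  shows "perfect_elim_order (clique_adj Cs) {1..p} (rev us)"
  using run_inv[OF run] init_peo finished by simp

end
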